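(* Let $m,a\in\mathbb N$ and let $\mathfrak o$ be a compact discrete valuation ring. Let $V^*_{m,a}(\mathfrak o)$ be the $\mathfrak o$-representation of the dual star quiver $\mathsf S^*_a$ in which every vertex is represented by $\mathfrak o^m$ and every arrow by the identity map. Then $$\zeta_{V^*_{m,a}(\mathfrak o)}(s)=\zeta_{\mathfrak o^m}(as)\,\zeta_{\mathfrak o^m}(s)^{a-1}.$$
   Context: The dual star quiver $\mathsf S^*_a$ has vertices $v_1,\dots,v_a$ and arrows $v_j\to v_1$ for $j=2,\dots,a$. Subrepresentations of a representation $(\mathcal L_\iota,f_\phi)$ are tuples of submodules $\Lambda_\iota\le\mathcal L_\iota$ with $f_\phi(\Lambda_{\mathrm{tail}(\phi)})\subseteq\Lambda_{\mathrm{head}(\phi)}$, and $\zeta_V(s)=\sum_{V'}\prod_\iota|\mathcal L_\iota:\Lambda_\iota|^{-s}$ over finite-index subrepresentations. $\zeta_{\mathfrak o^m}(s)=\sum_{U}|\mathfrak o^m:U|^{-s}$ sums over all $\mathfrak o$-submodules $U$ of finite index in $\mathfrak o^m$. *)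

theory Defs
  imports "HOL-Analysis.Analysis"
begin

definition uniformizer :: "'a::idom \<Rightarrow> bool" where
  "uniformizer p \<longleftrightarrow> p \<noteq> 0 \<and> \<not> p dvd 1 \<and>
     (\<forall>x. x \<noteq> 0 \<longrightarrow> (\<exists>u n. u dvd 1 \<and> x = u * p ^ n))"

definition is_dvr :: "'a::idom itself \<Rightarrow> bool" where
  "is_dvr _ \<longleftrightarrow> (\<exists>p::'a. uniformizer p)"

definition adic_topology :: "'a::idom \<Rightarrow> 'a topology" where
  "adic_topology p = topology_generated_by {{x + p ^ n * y | y. True} | x n. True}"

definition is_compact_dvr :: "'a::idom itself \<Rightarrow> bool" where
  "is_compact_dvr T \<longleftrightarrow> (\<exists>p::'a. uniformizer p \<and> compact_space (adic_topology p))"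

text \<open>o^m is modelled as functions nat => o vanishing from index m on.\<close>
definition fvec :: "nat \<Rightarrow> (nat \<Rightarrow> 'a::comm_ring_1) set" where
  "fvec m = {x. \<forall>i\<ge>m. x i = 0}"

definition submod :: "nat \<Rightarrow> (nat \<Rightarrow> 'a::comm_ring_1) set \<Rightarrow> bool" where
  "submod m U \<longleftrightarrow> U \<subseteq> fvec m \<and> (\<lambda>i. 0) \<in> U \<and>
     (\<forall>x\<in>U. \<forall>y\<in>U. (\<lambda>i. x i + y i) \<in> U) \<and> (\<forall>c. \<forall>x\<in>U. (\<lambda>i. c * x i) \<in> U)"

definition cosets :: "nat \<Rightarrow> (nat \<Rightarrow> 'a::comm_ring_1) set \<Rightarrow> (nat \<Rightarrow> 'a) set set" where
  "cosets m U = (\<lambda>x. {(\<lambda>i. x i + u i) | u. u \<in> U}) ` fvec m"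

definition findex_submod :: "nat \<Rightarrow> (nat \<Rightarrow> 'a::comm_ring_1) set \<Rightarrow> bool" where
  "findex_submod m U \<longleftrightarrow> submod m U \<and> finite (cosets m U)"

definition mindex :: "nat \<Rightarrow> (nat \<Rightarrow> 'a::comm_ring_1) set \<Rightarrow> nat" where
  "mindex m U = card (cosets m U)"

definition zeta_free :: "'a::comm_ring_1 itself \<Rightarrow> nat \<Rightarrow> complex \<Rightarrow> complex" where
  "zeta_free T m s =
     infsum (\<lambda>U::(nat \<Rightarrow> 'a) set. (of_nat (mindex m U) :: complex) powr (- s))
            {U. findex_submod m U}"

text \<open>A representation of a quiver with vertices {..<n}, arrow set E with tail
and head maps, vertex modules o^(d i), and arrow maps f e : o^(d (tail e)) -> o^(d (head e)).
A finite-index subrepresentation is a tuple of finite-index submodules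
(set to the empty set outside the vertex set) compatible with the arrow maps.\<close>
definition fi_subrep ::
  "nat \<Rightarrow> 'e set \<Rightarrow> ('e \<Rightarrow> nat) \<Rightarrow> ('e \<Rightarrow> nat) \<Rightarrow> (nat \<Rightarrow> nat) \<Rightarrow>
   ('e \<Rightarrow> (nat \<Rightarrow> 'a) \<Rightarrow> (nat \<Rightarrow> 'a)) \<Rightarrow> (nat \<Rightarrow> (nat \<Rightarrow> 'a::comm_ring_1) set) \<Rightarrow> bool" where
  "fi_subrep n E tail head d f \<Lambda> \<longleftrightarrow>
     (\<forall>i<n. findex_submod (d i) (\<Lambda> i)) \<and> (\<forall>i\<ge>n. \<Lambda> i = {}) \<and>
     (\<forall>e\<in>E. f e ` \<Lambda> (tail e) \<subseteq> \<Lambda> (head e))"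

definition zeta_rep ::
  "nat \<Rightarrow> 'e set \<Rightarrow> ('e \<Rightarrow> nat) \<Rightarrow> ('e \<Rightarrow> nat) \<Rightarrow> (nat \<Rightarrow> nat) \<Rightarrow>
   ('e \<Rightarrow> (nat \<Rightarrow> 'a::comm_ring_1) \<Rightarrow> (nat \<Rightarrow> 'a)) \<Rightarrow> complex \<Rightarrow> complex" where
  "zeta_rep n E tail head d f s =
     infsum (\<lambda>\<Lambda>::nat \<Rightarrow> (nat \<Rightarrow> 'a) set.
               \<Prod>i<n. (of_nat (mindex (d i) (\<Lambda> i)) :: complex) powr (- s))
            {\<Lambda>. fi_subrep n E tail head d f \<Lambda>}"

text \<open>V*_{m,a}(o): dual star quiver S*_a with vertices v_1..v_a encoded as 0..a-1,
arrows j -> 0 for j = 1..a-1 (arrow named by its tail), every vertex o^m,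
every arrow the identity.\<close>
definition zeta_dual_star :: "'a::comm_ring_1 itself \<Rightarrow> nat \<Rightarrow> nat \<Rightarrow> complex \<Rightarrow> complex" where
  "zeta_dual_star T m a s =
     zeta_rep a {1..<a} (\<lambda>j. j) (\<lambda>j. 0) (\<lambda>i. m)
              (\<lambda>j (x::nat \<Rightarrow> 'a). x) s"

end

theory Submission
  imports Defs "HOL-Library.Function_Algebras"
begin

definition cs :: "'g::ab_group_add set \<Rightarrow> 'g set \<Rightarrow> 'g set set" where
  "cs A V = (\<lambda>x. (+) x ` V) ` A"

definition sg :: "'g::ab_group_add set \<Rightarrow> bool" where
  "sg V \<longleftrightarrow> 0 \<in> V \<and> (\<forall>x\<in>V. \<forall>y\<in>V. x + y \<in> V) \<and> (\<forall>x\<in>V. - x \<in> V)"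

lemma sg_diff: "sg V \<Longrightarrow> x \<in> V \<Longrightarrow> y \<in> V \<Longrightarrow> x - y \<in> V"
  unfolding sg_def by (metis diff_conv_add_uminus)

lemma coset_eq:
  assumes "sg V"
  shows "((+) x ` V = (+) y ` V) \<longleftrightarrow> x - y \<in> V"
proof
  assume h: "(+) x ` V = (+) y ` V"
  have "x \<in> (+) x ` V" using assms unfolding sg_def by (metis add.right_neutral image_eqI)
  then obtain v where "v \<in> V" "x = y + v" using h by auto
  then show "x - y \<in> V" by simp
next
  assume h: "x - y \<in> V"
  show "(+) x ` V = (+) y ` V"
  proof safe
    fix v assume "v \<in> V"
    have "x + v = y + ((x - y) + v)" by simp
    moreover have "(x - y) + v \<in> V" using assms h \<open>v \<in> V\<close> unfolding sg_def by blast
    ultimately show "x + v \<in> (+) y ` V" by blast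
  next
    fix v assume "v \<in> V"
    have "y + v = x + (v - (x - y))" by simp
    moreover have "v - (x - y) \<in> V" using assms h \<open>v \<in> V\<close> by (simp add: sg_diff)
    ultimately show "y + v \<in> (+) x ` V" by blast
  qed
qed

lemma card_image_eqrel:
  assumes "\<And>x y. x \<in> W \<Longrightarrow> y \<in> W \<Longrightarrow> f x = f y \<longleftrightarrow> g x = g y"
  shows "card (f ` W) = card (g ` W)"
proof -
  define \<Theta> where "\<Theta> c = g (SOME x. x \<in> W \<and> f x = c)" for c
  have th: "\<Theta> (f x) = g x" if "x \<in> W" for x
  proof -
    have "\<exists>z. z \<in> W \<and> f z = f x" using that by blast
    then have "(SOME z. z \<in> W \<and> f z = f x) \<in> W \<and> f (SOME z. z \<in> W \<and> f z = f x) = f x"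
      by (rule someI_ex)
    then show ?thesis unfolding \<Theta>_def using assms that by blast
  qed
  have "bij_betw \<Theta> (f ` W) (g ` W)"
    unfolding bij_betw_def inj_on_def
  proof safe
    fix x y assume "x \<in> W" "y \<in> W" "\<Theta> (f x) = \<Theta> (f y)"
    then show "f x = f y" using th assms by metis
  next
    fix x assume "x \<in> W" then show "\<Theta> (f x) \<in> g ` W" using th by auto
  next
    fix x assume "x \<in> W" then show "g x \<in> \<Theta> ` f ` W" using th by (metis image_eqI)
  qed
  then show ?thesis by (rule bij_betw_same_card)
qed

lemma lagrange:
  assumes sA: "sg A" and sW: "sg W" and sV: "sg V" and VW: "V \<subseteq> W" and WA: "W \<subseteq> A"
  shows "card (cs A V) = card (cs A W) * card (cs W V)"
proof -
  define r where "r C = (SOME x. x \<in> A \<and> C = (+) x ` W)" for C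
  have r: "r ((+) x ` W) \<in> A \<and> (+) x ` W = (+) (r ((+) x ` W)) ` W" if "x \<in> A" for x
  proof -
    have "\<exists>z. z \<in> A \<and> (+) x ` W = (+) z ` W" using that by blast
    then show ?thesis unfolding r_def by (rule someI_ex)
  qed
  define F where "F x = ((+) x ` W, (+) (x - r ((+) x ` W)) ` V)" for x
  have eq: "(+) x ` V = (+) y ` V \<longleftrightarrow> F x = F y" if "x \<in> A" "y \<in> A" for x y
  proof
    assume "(+) x ` V = (+) y ` V"
    then have "x - y \<in> V" using coset_eq[OF sV] by blast
    then have xyW: "(+) x ` W = (+) y ` W" using coset_eq[OF sW] VW by blast
    have "(x - r ((+) x ` W)) - (y - r ((+) y ` W)) = x - y" using xyW by simp
    then show "F x = F y" unfolding F_def using xyW coset_eq[OF sV] \<open>x - y \<in> V\<close> by simp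
  next
    assume "F x = F y"
    then have xyW: "(+) x ` W = (+) y ` W" and
      "(+) (x - r ((+) x ` W)) ` V = (+) (y - r ((+) y ` W)) ` V" unfolding F_def by auto
    then have "(x - r ((+) x ` W)) - (y - r ((+) y ` W)) \<in> V" using coset_eq[OF sV] by blast
    then have "x - y \<in> V" using xyW by simp
    then show "(+) x ` V = (+) y ` V" using coset_eq[OF sV] by blast
  qed
  have "card (cs A V) = card (F ` A)"
    unfolding cs_def by (rule card_image_eqrel) (use eq in blast)
  also have "F ` A = cs A W \<times> cs W V"
  proof
    show "F ` A \<subseteq> cs A W \<times> cs W V"
    proof
      fix z assume "z \<in> F ` A"
      then obtain x where x: "x \<in> A" "z = F x" by auto
      have rx: "r ((+) x ` W) \<in> A" "(+) x ` W = (+) (r ((+) x ` W)) ` W" using r[OF x(1)] by auto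
      have "x - r ((+) x ` W) \<in> W" using rx coset_eq[OF sW] by blast
      then show "z \<in> cs A W \<times> cs W V" unfolding x F_def cs_def using x(1) by auto
    qed
  next
    show "cs A W \<times> cs W V \<subseteq> F ` A"
    proof clarify
      fix a b assume "a \<in> cs A W" "b \<in> cs W V"
      then obtain x d where x: "x \<in> A" "a = (+) x ` W" and d: "d \<in> W" "b = (+) d ` V"
        unfolding cs_def by auto
      have rx: "r a \<in> A" "a = (+) (r a) ` W" using r[OF x(1)] x(2) by auto
      define z where "z = r a + d"
      have zA: "z \<in> A" unfolding z_def using rx d WA sA unfolding sg_def by blast
      have "z - r a \<in> W" using d by (simp add: z_def)
      then have za: "(+) z ` W = a" using coset_eq[OF sW] rx by metis
      have "F z = (a, b)" unfolding F_def za using d by (simp add: z_def)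
      then show "(a, b) \<in> F ` A" using zA by (metis image_eqI)
    qed
  qed
  finally show ?thesis by (simp add: card_cartesian_product)
qed

lemma fvec_sg: "sg (fvec m :: (nat \<Rightarrow> 'a::comm_ring_1) set)"
  unfolding sg_def fvec_def by auto

lemma submod_sg:
  assumes "submod m (U :: (nat \<Rightarrow> 'a::comm_ring_1) set)" shows "sg U"
proof -
  have z: "(0::nat\<Rightarrow>'a) = (\<lambda>i. 0)" by auto
  have n: "- x = (\<lambda>i. (-1) * x i)" for x :: "nat \<Rightarrow> 'a" by auto
  have p: "x + y = (\<lambda>i. x i + y i)" for x y :: "nat \<Rightarrow> 'a" by auto
  show ?thesis using assms unfolding sg_def submod_def z n p by blast
qed

lemma cosets_cs: "cosets m U = cs (fvec m) U"
proof -
  have "{(\<lambda>i. x i + u i) | u. u \<in> U} = (+) x ` U" for x :: "nat \<Rightarrow> 'a"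
    by (auto simp: plus_fun_def)
  then show ?thesis unfolding cosets_def cs_def by simp
qed

lemma mindex_cs: "mindex m U = card (cs (fvec m) U)"
  unfolding mindex_def cosets_cs ..

lemma mindex_pos:
  assumes "findex_submod m (U :: (nat \<Rightarrow> 'a::comm_ring_1) set)" shows "mindex m U > 0"
proof -
  have "(\<lambda>i. 0) \<in> fvec m" unfolding fvec_def by simp
  then have "cosets m U \<noteq> {}" unfolding cosets_def by blast
  then show ?thesis using assms unfolding findex_submod_def mindex_def by (simp add: card_gt_0_iff)
qed

lemma unif_pow_nz: "uniformizer (p::'a::idom) \<Longrightarrow> p ^ n \<noteq> 0"
  unfolding uniformizer_def by simp

lemma unif_pow_inj:
  assumes u: "uniformizer (p::'a::idom)" and e: "p ^ n = p ^ k" shows "n = k"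
proof (rule ccontr)
  assume "n \<noteq> k"
  then consider "n < k" | "k < n" by linarith
  then show False
  proof cases
    case 1
    then have "p ^ k = p ^ n * p ^ (k - n)" by (simp flip: power_add)
    then have "p ^ n * 1 = p ^ n * p ^ (k - n)" using e by simp
    then have "p ^ (k - n) = 1" using unif_pow_nz[OF u] by (metis mult_left_cancel)
    then have "p dvd 1" using 1 by (metis dvd_power gr0I zero_less_diff dvd_refl)
    then show False using u unfolding uniformizer_def by simp
  next
    case 2
    then have "p ^ n = p ^ k * p ^ (n - k)" by (simp flip: power_add)
    then have "p ^ k * 1 = p ^ k * p ^ (n - k)" using e by simp
    then have "p ^ (n - k) = 1" using unif_pow_nz[OF u] by (metis mult_left_cancel)
    then have "p dvd 1" using 2 by (metis dvd_power gr0I zero_less_diff dvd_refl)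
    then show False using u unfolding uniformizer_def by simp
  qed
qed

lemma unif_infinite: assumes "uniformizer (p::'a::idom)" shows "infinite (UNIV :: 'a set)"
proof
  assume "finite (UNIV :: 'a set)"
  moreover have "inj (\<lambda>n::nat. p ^ n)" using unif_pow_inj[OF assms] by (auto simp: inj_def)
  ultimately show False
    by (metis finite_imageD infinite_UNIV_nat rev_finite_subset subset_UNIV)
qed

definition PI :: "'a::idom \<Rightarrow> nat \<Rightarrow> 'a set" where
  "PI p j = range (\<lambda>y. p ^ j * y)"

lemma PI_dvd: "x \<in> PI p j \<longleftrightarrow> p ^ j dvd x"
  unfolding PI_def by (auto simp: dvd_def)

lemma PI_sg: "sg (PI p j)"
  by (simp add: sg_def PI_dvd dvd_add)

lemma cs_PI_Suc:
  assumes u: "uniformizer (p::'a::idom)"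
  shows "card (cs UNIV (PI p (Suc j))) = card (cs UNIV (PI p j)) * card (cs UNIV (PI p 1))"
proof -
  have "card (cs UNIV (PI p (Suc j))) = card (cs UNIV (PI p j)) * card (cs (PI p j) (PI p (Suc j)))"
    by (rule lagrange) (auto simp: PI_sg sg_def PI_dvd intro: dvd_mult_right)
  also have "card (cs (PI p j) (PI p (Suc j))) = card (cs UNIV (PI p 1))"
  proof -
    have "cs (PI p j) (PI p (Suc j)) = ((\<lambda>x. (+) x ` PI p (Suc j)) \<circ> (\<lambda>y. p ^ j * y)) ` UNIV"
      unfolding cs_def PI_def by (simp add: image_comp)
    moreover have "card (((\<lambda>x. (+) x ` PI p (Suc j)) \<circ> (\<lambda>y. p ^ j * y)) ` UNIV)
        = card ((\<lambda>x. (+) x ` PI p 1) ` UNIV)"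
    proof (rule card_image_eqrel)
      fix x y :: 'a
      have "p ^ j * x - p ^ j * y \<in> PI p (Suc j) \<longleftrightarrow> x - y \<in> PI p 1"
      proof -
        have "p ^ j * x - p ^ j * y = p ^ j * (x - y)" by (simp add: algebra_simps)
        moreover have "p ^ Suc j dvd p ^ j * z \<longleftrightarrow> p dvd z" for z
        proof -
          have "p \<noteq> 0" using u unfolding uniformizer_def by auto
          then show ?thesis by (simp add: mult.commute)
        qed
        ultimately show ?thesis by (simp add: PI_dvd)
      qed
      then show "((\<lambda>x. (+) x ` PI p (Suc j)) \<circ> (\<lambda>y. p ^ j * y)) x
           = ((\<lambda>x. (+) x ` PI p (Suc j)) \<circ> (\<lambda>y. p ^ j * y)) y \<longleftrightarrow>
           (+) x ` PI p 1 = (+) y ` PI p 1"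
        by (simp only: o_apply coset_eq[OF PI_sg])
    qed
    ultimately show ?thesis unfolding cs_def by simp
  qed
  finally show ?thesis .
qed

lemma cs_PI_pow:
  assumes u: "uniformizer (p::'a::idom)"
  shows "card (cs UNIV (PI p j)) = card (cs UNIV (PI p 1)) ^ j"
proof (induction j)
  case 0
  have "PI p 0 = UNIV" unfolding PI_def by (auto simp: image_iff)
  moreover have "range ((+) x) = (UNIV::'a set)" for x by (rule surjI[of _ "\<lambda>y. y - x"]) simp
  ultimately have "cs UNIV (PI p 0) = {UNIV}" unfolding cs_def by auto
  then show ?case by simp
next
  case (Suc j)
  then show ?case using cs_PI_Suc[OF u, of j] by simp
qed

lemma q_ge2:
  assumes u: "uniformizer (p::'a::idom)"
  shows "card (cs UNIV (PI p 1)) \<ge> 2 \<or> infinite (cs UNIV (PI p 1))"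
proof -
  have a: "(+) 0 ` PI p 1 \<in> cs UNIV (PI p 1)" "(+) 1 ` PI p 1 \<in> cs UNIV (PI p 1)"
    unfolding cs_def by blast+
  have "(0::'a) - 1 \<notin> PI p 1" using u unfolding PI_dvd uniformizer_def by simp
  then have "(+) 0 ` PI p 1 \<noteq> (+) 1 ` PI p 1" using coset_eq[OF PI_sg] by blast
  then have "card {(+) 0 ` PI p 1, (+) 1 ` PI p 1} = 2" by simp
  moreover have "finite (cs UNIV (PI p 1)) \<Longrightarrow> card {(+) 0 ` PI p 1, (+) 1 ` PI p 1} \<le> card (cs UNIV (PI p 1))"
    using a by (intro card_mono) auto
  ultimately show ?thesis by auto
qed

lemma cs_obtain: "C \<in> cs A V \<Longrightarrow> (\<And>x. x \<in> A \<Longrightarrow> C = (+) x ` V \<Longrightarrow> P) \<Longrightarrow> P"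
  unfolding cs_def by blast

lemma q_finite:
  assumes c: "compact_space (adic_topology (p::'a::idom))"
  shows "finite (cs UNIV (PI p 1))"
proof -
  let ?S = "{{x + p ^ n * y | y. True} | x n. True}"
  have cosopen: "C \<in> ?S" if hC: "C \<in> cs UNIV (PI p 1)" for C
  proof -
    from hC obtain x where "x \<in> UNIV" "C = (+) x ` PI p 1" by (rule cs_obtain)
    moreover have "(+) x ` PI p 1 = {x + p ^ 1 * y | y. True}" unfolding PI_def by auto
    ultimately have "C = {x + p ^ 1 * y | y. True}" by simp
    then show ?thesis by (intro CollectI exI conjI) (assumption, rule TrueI)
  qed
  have top0: "UNIV \<subseteq> \<Union>?S"
  proof
    fix x :: 'a
    have "x \<in> {x + p ^ 0 * y | y. True}" by (intro CollectI exI[of _ 0]) simp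
    moreover have "{x + p ^ 0 * y | y. True} \<in> ?S" by (intro CollectI exI conjI) (rule refl, rule TrueI)
    ultimately show "x \<in> \<Union>?S" by (rule UnionI[rotated])
  qed
  have top: "topspace (adic_topology p) = UNIV"
    unfolding adic_topology_def topology_generated_by_topspace using top0 by (rule top_le)
  have "\<forall>U\<in>cs UNIV (PI p 1). openin (adic_topology p) U"
  proof
    fix U assume "U \<in> cs UNIV (PI p 1)"
    then show "openin (adic_topology p) U" unfolding adic_topology_def
      by (rule topology_generated_by_Basis[OF cosopen])
  qed
  moreover have "topspace (adic_topology p) \<subseteq> \<Union>(cs UNIV (PI p 1))"
  proof
    fix x :: 'a
    have "x \<in> (+) x ` PI p 1" unfolding PI_def by (intro image_eqI[where x=0]) auto
    moreover have "(+) x ` PI p 1 \<in> cs UNIV (PI p 1)" unfolding cs_def by blast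
    ultimately show "x \<in> \<Union>(cs UNIV (PI p 1))" by blast
  qed
  ultimately have "(\<forall>U\<in>cs UNIV (PI p 1). openin (adic_topology p) U) \<and>
      topspace (adic_topology p) \<subseteq> \<Union>(cs UNIV (PI p 1))" by (rule conjI)
  moreover have "(\<forall>U\<in>cs UNIV (PI p 1). openin (adic_topology p) U) \<and>
      topspace (adic_topology p) \<subseteq> \<Union>(cs UNIV (PI p 1)) \<longrightarrow>
      (\<exists>F. finite F \<and> F \<subseteq> cs UNIV (PI p 1) \<and> topspace (adic_topology p) \<subseteq> \<Union>F)"
    using c unfolding compact_space_alt by (rule spec)
  ultimately have "\<exists>F. finite F \<and> F \<subseteq> cs UNIV (PI p 1) \<and> topspace (adic_topology p) \<subseteq> \<Union>F"
    by (rule rev_mp)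
  then obtain F where F: "finite F" "F \<subseteq> cs UNIV (PI p 1)" "UNIV \<subseteq> \<Union>F"
    unfolding top by blast
  have "cs UNIV (PI p 1) \<subseteq> F"
  proof
    fix C assume "C \<in> cs UNIV (PI p 1)"
    then obtain x where "x \<in> UNIV" and C: "C = (+) x ` PI p 1" by (rule cs_obtain)
    have "x \<in> \<Union>F" using F(3) by (rule subsetD) (rule UNIV_I)
    then obtain D where D: "D \<in> F" "x \<in> D" by (rule UnionE)
    have "D \<in> cs UNIV (PI p 1)" using F(2) D(1) by (rule subsetD)
    then obtain y where "y \<in> UNIV" and y: "D = (+) y ` PI p 1" by (rule cs_obtain)
    from D(2)[unfolded y] obtain v where "x = y + v" "v \<in> PI p 1" by (rule imageE)
    then have "x - y \<in> PI p 1" by simp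
    then have "C = D" using C y coset_eq[OF PI_sg, of x p 1 y] by simp
    then show "C \<in> F" using D by simp
  qed
  then show ?thesis using F(1) by (rule finite_subset)
qed

lemma fun_diff_apply: "(x - y) i = x i - (y i :: 'a::ab_group_add)" by (simp add: fun_diff_def)

lemma submod_smul: "submod m U \<Longrightarrow> x \<in> U \<Longrightarrow> (\<lambda>i. c * x i) \<in> U"
  unfolding submod_def by blast

lemma fvec_diff_Suc:
  fixes x y :: "nat \<Rightarrow> 'a::comm_ring_1"
  assumes "x \<in> fvec (Suc m)" "y \<in> fvec (Suc m)"
  shows "x - y \<in> fvec m \<longleftrightarrow> x m = y m"
proof -
  have "x i = 0 \<and> y i = 0" if "i > m" for i using assms that unfolding fvec_def by auto
  then show ?thesis unfolding fvec_def fun_diff_apply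
    by (auto simp: le_less)
qed

lemma exists_nonzero_last:
  fixes U :: "(nat \<Rightarrow> 'a::idom) set"
  assumes u: "uniformizer (p::'a)" and U: "findex_submod (Suc m) U"
  shows "\<exists>x\<in>U. x m \<noteq> 0"
proof (rule ccontr)
  assume "\<not> ?thesis"
  then have xm: "x m = 0" if "x \<in> U" for x using that by blast
  have Usub: "U \<subseteq> fvec (Suc m)" using U unfolding findex_submod_def submod_def by blast
  have sub: "U \<subseteq> fvec m"
  proof
    fix x assume x: "x \<in> U"
    then have "x \<in> fvec (Suc m)" using Usub by blast
    then have h: "\<forall>i\<ge>Suc m. x i = 0" unfolding fvec_def by simp
    have "x i = 0" if "i \<ge> m" for i
    proof (cases "i = m")
      case True then show ?thesis using xm[OF x] by simp
    next
      case False then show ?thesis using h that by simp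
    qed
    then show "x \<in> fvec m" unfolding fvec_def by simp
  qed
  have fsub: "fvec m \<subseteq> (fvec (Suc m) :: (nat \<Rightarrow> 'a) set)" unfolding fvec_def by auto
  have "submod (Suc m) U" using U unfolding findex_submod_def by simp
  then have sU: "sg U" by (rule submod_sg)
  have "mindex (Suc m) U = card (cs (fvec (Suc m)) (fvec m :: (nat \<Rightarrow> 'a) set)) * card (cs (fvec m) U)"
    unfolding mindex_cs by (rule lagrange[OF fvec_sg fvec_sg sU sub fsub])
  also have "card (cs (fvec (Suc m)) (fvec m :: (nat \<Rightarrow> 'a) set)) = card ((\<lambda>x::nat\<Rightarrow>'a. x m) ` fvec (Suc m))"
    unfolding cs_def
    by (rule card_image_eqrel) (simp add: coset_eq[OF fvec_sg] fvec_diff_Suc)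
  also have "(\<lambda>x::nat\<Rightarrow>'a. x m) ` fvec (Suc m) = UNIV"
  proof -
    have "(\<lambda>i. if i = m then c else 0) \<in> fvec (Suc m)" for c :: 'a unfolding fvec_def by auto
    then have "c \<in> (\<lambda>x::nat\<Rightarrow>'a. x m) ` fvec (Suc m)" for c :: 'a
      by (rule rev_image_eqI) simp
    then show ?thesis by blast
  qed
  also have "card (UNIV :: 'a set) = 0" using unif_infinite[OF u] by (rule card.infinite)
  finally show False using mindex_pos[OF U] by simp
qed

lemma valuation_choice:
  fixes U :: "(nat \<Rightarrow> 'a::idom) set"
  assumes u: "uniformizer (p::'a)" and U: "findex_submod (Suc m) U"
  obtains j u0 where "u0 \<in> U" "u0 m = p ^ j" "\<forall>x\<in>U. p ^ j dvd x m"
proof -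
  have sm: "submod (Suc m) U" using U unfolding findex_submod_def by simp
  define vs where "vs = {n. \<exists>x\<in>U. \<exists>v. v dvd 1 \<and> x m = v * p ^ n}"
  obtain x where x: "x \<in> U" "x m \<noteq> 0" using exists_nonzero_last[OF u U] by blast
  then obtain v n where "v dvd 1" "x m = v * p ^ n" using u unfolding uniformizer_def by blast
  then have "n \<in> vs" unfolding vs_def using x by blast
  define j where "j = (LEAST n. n \<in> vs)"
  have "j \<in> vs" unfolding j_def using \<open>n \<in> vs\<close> by (rule LeastI)
  then obtain x0 v0 where x0: "x0 \<in> U" "v0 dvd 1" "x0 m = v0 * p ^ j" unfolding vs_def by blast
  obtain w where w: "1 = v0 * w" using x0(2) by (auto elim: dvdE)
  define u0 where "u0 = (\<lambda>i. w * x0 i)"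
  have "u0 \<in> U" unfolding u0_def by (rule submod_smul[OF sm x0(1)])
  moreover have "u0 m = p ^ j" unfolding u0_def x0(3)
    by (metis mult.assoc mult.commute mult_1 w)
  moreover have "\<forall>y\<in>U. p ^ j dvd y m"
  proof
    fix y assume y: "y \<in> U"
    show "p ^ j dvd y m"
    proof (cases "y m = 0")
      case True then show ?thesis by simp
    next
      case False
      then obtain v' n' where "v' dvd 1" "y m = v' * p ^ n'" using u unfolding uniformizer_def by blast
      then have "n' \<in> vs" unfolding vs_def using y by blast
      then have "j \<le> n'" unfolding j_def by (rule Least_le)
      then have "p ^ j dvd p ^ n'" by (rule le_imp_power_dvd)
      then show ?thesis using \<open>y m = v' * p ^ n'\<close> by simp
    qed
  qed
  ultimately show ?thesis using that by blast
qed

lemma fvec_Suc_zero: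
  assumes "x \<in> fvec (Suc m)" "x m = 0" shows "x \<in> fvec m"
proof -
  have h: "\<forall>i\<ge>Suc m. x i = 0" using assms(1) unfolding fvec_def by simp
  have "x i = 0" if "i \<ge> m" for i
  proof (cases "i = m")
    case True then show ?thesis using assms(2) by simp
  next
    case False then show ?thesis using h that by simp
  qed
  then show "x \<in> fvec m" unfolding fvec_def by simp
qed

lemma last_surj: "(\<lambda>x::nat\<Rightarrow>'a::comm_ring_1. x m) ` fvec (Suc m) = UNIV"
proof -
  have "(\<lambda>i. if i = m then c else 0) \<in> fvec (Suc m)" for c :: 'a unfolding fvec_def by auto
  then have "c \<in> (\<lambda>x::nat\<Rightarrow>'a. x m) ` fvec (Suc m)" for c :: 'a
    by (rule rev_image_eqI) simp
  then show ?thesis by blast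
qed

lemma decomp_index:
  fixes U :: "(nat \<Rightarrow> 'a::idom) set"
  assumes u: "uniformizer (p::'a)" and U: "findex_submod (Suc m) U"
    and u0: "u0 \<in> U" "u0 m = p ^ j" and dv: "\<forall>x\<in>U. p ^ j dvd x m"
  shows "findex_submod m {x\<in>U. x m = 0}"
    and "mindex (Suc m) U = mindex m {x\<in>U. x m = 0} * card (cs UNIV (PI p j))"
proof -
  define U' where "U' = {x\<in>U. x m = 0}"
  define W where "W = {x\<in>fvec (Suc m). p ^ j dvd x m}"
  have sm: "submod (Suc m) U" using U unfolding findex_submod_def by simp
  then have sU: "sg U" by (rule submod_sg)
  have Usub: "U \<subseteq> fvec (Suc m)" using sm unfolding submod_def by simp
  have U'sub: "U' \<subseteq> fvec m"
    using Usub fvec_Suc_zero unfolding U'_def by blast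
  have U'U: "U' \<subseteq> U" unfolding U'_def by blast
  have smU': "submod m U'"
    unfolding submod_def
  proof (intro conjI ballI allI)
    show "U' \<subseteq> fvec m" by (rule U'sub)
    show "(\<lambda>i. 0) \<in> U'" using sm unfolding submod_def U'_def by simp
    show "(\<lambda>i. x i + y i) \<in> U'" if "x \<in> U'" "y \<in> U'" for x y
      using that sm unfolding submod_def U'_def by simp
    show "(\<lambda>i. c * x i) \<in> U'" if "x \<in> U'" for c x
      using that sm unfolding submod_def U'_def by simp
  qed
  then have sU': "sg U'" by (rule submod_sg)
  have sW: "sg W" unfolding W_def sg_def
  proof (intro conjI ballI)
    show "0 \<in> {x \<in> fvec (Suc m). p ^ j dvd x m}" by (simp add: fvec_def)
    show "x + y \<in> {x \<in> fvec (Suc m). p ^ j dvd x m}"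
      if "x \<in> {x \<in> fvec (Suc m). p ^ j dvd x m}" "y \<in> {x \<in> fvec (Suc m). p ^ j dvd x m}" for x y
      using that by (auto simp: fvec_def dvd_add)
    show "- x \<in> {x \<in> fvec (Suc m). p ^ j dvd x m}"
      if "x \<in> {x \<in> fvec (Suc m). p ^ j dvd x m}" for x
      using that by (auto simp: fvec_def fun_Compl_def)
  qed
  have UW: "U \<subseteq> W" unfolding W_def using Usub dv by blast
  have Wfv: "W \<subseteq> fvec (Suc m)" unfolding W_def by blast
  have L: "card (cs (fvec (Suc m)) U) = card (cs (fvec (Suc m)) W) * card (cs W U)"
    by (rule lagrange[OF fvec_sg sW sU UW Wfv])
  have A: "card (cs (fvec (Suc m)) W) = card (cs UNIV (PI p j))"
  proof -
    have "card ((\<lambda>x. (+) x ` W) ` fvec (Suc m)) = card ((\<lambda>x. (+) (x m) ` PI p j) ` fvec (Suc m))"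
    proof (rule card_image_eqrel)
      fix x y :: "nat \<Rightarrow> 'a" assume xy: "x \<in> fvec (Suc m)" "y \<in> fvec (Suc m)"
      have "x - y \<in> fvec (Suc m)" using xy fvec_sg by (rule sg_diff[rotated])
      then have "x - y \<in> W \<longleftrightarrow> x m - y m \<in> PI p j" unfolding W_def PI_dvd by (simp add: fun_diff_apply)
      then show "((+) x ` W = (+) y ` W) \<longleftrightarrow> ((+) (x m) ` PI p j = (+) (y m) ` PI p j)"
        by (simp add: coset_eq[OF sW] coset_eq[OF PI_sg])
    qed
    also have "(\<lambda>x. (+) (x m) ` PI p j) ` fvec (Suc m) = (\<lambda>c. (+) c ` PI p j) ` ((\<lambda>x::nat\<Rightarrow>'a. x m) ` fvec (Suc m))"
      by (simp add: image_comp o_def)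
    also have "\<dots> = cs UNIV (PI p j)" unfolding last_surj cs_def ..
    finally show ?thesis unfolding cs_def .
  qed
  define c where "c x = (SOME c. x m = p ^ j * c)" for x :: "nat \<Rightarrow> 'a"
  have c: "x m = p ^ j * c x" if "x \<in> W" for x
  proof -
    have "\<exists>c. x m = p ^ j * c" using that unfolding W_def by (auto elim: dvdE)
    then show ?thesis unfolding c_def by (rule someI_ex)
  qed
  have pnz: "p ^ j \<noteq> 0" by (rule unif_pow_nz[OF u])
  define h where "h x = x - (\<lambda>i. c x * u0 i)" for x
  have u0fv: "u0 \<in> fvec (Suc m)" using u0(1) Usub by blast
  have hfv: "h x \<in> fvec m" if "x \<in> W" for x
  proof (rule fvec_Suc_zero)
    have "x \<in> fvec (Suc m)" using that Wfv by blast
    then show "h x \<in> fvec (Suc m)" unfolding h_def using u0fv unfolding fvec_def by (simp add: fun_diff_apply)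
    show "h x m = 0" unfolding h_def using c[OF that] u0(2) by (simp add: fun_diff_apply mult.commute)
  qed
  have hW: "h ` W = fvec m"
  proof
    show "h ` W \<subseteq> fvec m" using hfv by blast
    show "fvec m \<subseteq> h ` W"
    proof
      fix y :: "nat \<Rightarrow> 'a" assume y: "y \<in> fvec m"
      then have ym: "y m = 0" unfolding fvec_def by simp
      have yW: "y \<in> W" unfolding W_def using y ym unfolding fvec_def by simp
      have "p ^ j * c y = 0" using c[OF yW] ym by simp
      then have "c y = 0" using pnz by (simp only: mult_eq_0_iff) blast
      then have "h y = y" unfolding h_def by (simp add: fun_diff_def)
      then show "y \<in> h ` W" using yW by (metis image_eqI)
    qed
  qed
  have B: "card (cs W U) = card (cs (fvec m) U')"
  proof -
    have "card ((\<lambda>x. (+) x ` U) ` W) = card (((\<lambda>x. (+) x ` U') \<circ> h) ` W)"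
    proof (rule card_image_eqrel)
      fix x y assume xy: "x \<in> W" "y \<in> W"
      define d where "d = (\<lambda>i. (c x - c y) * u0 i)"
      have dU: "d \<in> U" unfolding d_def by (rule submod_smul[OF sm u0(1)])
      have hd: "h x - h y = (x - y) - d" unfolding h_def d_def by (auto simp: fun_diff_def algebra_simps)
      have "x - y \<in> U \<longleftrightarrow> h x - h y \<in> U'"
      proof
        assume "x - y \<in> U"
        then have "h x - h y \<in> U" unfolding hd using dU by (rule sg_diff[OF sU])
        moreover have "(h x - h y) m = 0" using hfv[OF xy(1)] hfv[OF xy(2)]
          unfolding fvec_def by (simp add: fun_diff_apply)
        ultimately show "h x - h y \<in> U'" unfolding U'_def by simp
      next
        assume "h x - h y \<in> U'"
        then have "h x - h y \<in> U" using U'U by blast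
        then have "(h x - h y) + d \<in> U" using dU sU unfolding sg_def by blast
        moreover have "(h x - h y) + d = x - y" unfolding hd by simp
        ultimately show "x - y \<in> U" by simp
      qed
      then show "((+) x ` U = (+) y ` U) \<longleftrightarrow> (((\<lambda>x. (+) x ` U') \<circ> h) x = ((\<lambda>x. (+) x ` U') \<circ> h) y)"
        by (simp add: coset_eq[OF sU] coset_eq[OF sU'])
    qed
    also have "((\<lambda>x. (+) x ` U') \<circ> h) ` W = cs (fvec m) U'"
      unfolding cs_def image_comp[symmetric] hW ..
    finally show ?thesis unfolding cs_def .
  qed
  have idx: "mindex (Suc m) U = mindex m U' * card (cs UNIV (PI p j))"
    unfolding mindex_cs L A B by simp
  then show "mindex (Suc m) U = mindex m {x\<in>U. x m = 0} * card (cs UNIV (PI p j))"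
    unfolding U'_def .
  have "mindex m U' > 0" using idx mindex_pos[OF U] by simp
  then have "finite (cosets m U')" unfolding mindex_def by (simp add: card_gt_0_iff)
  then show "findex_submod m {x\<in>U. x m = 0}" using smU' unfolding findex_submod_def U'_def by simp
qed

definition linmap :: "nat \<Rightarrow> ((nat \<Rightarrow> 'a::comm_ring_1) \<Rightarrow> (nat \<Rightarrow> 'a)) \<Rightarrow> bool" where
  "linmap m \<phi> \<longleftrightarrow> (\<forall>x\<in>fvec m. \<forall>y\<in>fvec m. \<phi> (x + y) = \<phi> x + \<phi> y) \<and>
      (\<forall>c. \<forall>x\<in>fvec m. \<phi> (\<lambda>i. c * x i) = (\<lambda>i. c * \<phi> x i))"

lemma submod_add: "submod m U \<Longrightarrow> x \<in> U \<Longrightarrow> y \<in> U \<Longrightarrow> x + y \<in> U"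
  unfolding submod_def plus_fun_def by blast

lemma free_param:
  fixes U :: "(nat \<Rightarrow> 'a::idom) set"
  assumes u: "uniformizer (p::'a)" and U: "findex_submod m U"
  shows "\<exists>\<phi>. linmap m \<phi> \<and> inj_on \<phi> (fvec m) \<and> \<phi> ` fvec m = U"
  using U
proof (induction m arbitrary: U)
  case 0
  have "fvec 0 = {(\<lambda>i. 0) :: nat \<Rightarrow> 'a}" unfolding fvec_def by auto
  moreover have "U \<subseteq> fvec 0" "(\<lambda>i. 0) \<in> U" using "0.prems" unfolding findex_submod_def submod_def by auto
  ultimately have "U = fvec 0" by (auto simp: subset_singleton_iff)
  then have "linmap 0 id \<and> inj_on id (fvec 0) \<and> id ` fvec 0 = U" unfolding linmap_def by simp
  then show ?case by blast
next
  case (Suc m)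
  have sm: "submod (Suc m) U" using Suc.prems unfolding findex_submod_def by simp
  have Usub: "U \<subseteq> fvec (Suc m)" using sm unfolding submod_def by simp
  obtain j u0 where u0: "u0 \<in> U" "u0 m = p ^ j" and dv: "\<forall>x\<in>U. p ^ j dvd x m"
    using valuation_choice[OF u Suc.prems] by blast
  define U' where "U' = {x\<in>U. x m = 0}"
  have fU': "findex_submod m U'" unfolding U'_def by (rule decomp_index(1)[OF u Suc.prems u0 dv])
  obtain \<psi> where \<psi>: "linmap m \<psi>" "inj_on \<psi> (fvec m)" "\<psi> ` fvec m = U'" using Suc.IH[OF fU'] by blast
  have pnz: "p ^ j \<noteq> 0" by (rule unif_pow_nz[OF u])
  define \<phi> where "\<phi> x = \<psi> (x(m := 0)) + (\<lambda>i. x m * u0 i)" for x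
  have cut: "x(m := 0) \<in> fvec m" if "x \<in> fvec (Suc m)" for x :: "nat \<Rightarrow> 'a"
    by (rule fvec_Suc_zero) (use that in \<open>auto simp: fvec_def\<close>)
  have lin: "linmap (Suc m) \<phi>" unfolding linmap_def
  proof (intro conjI ballI allI)
    fix x y :: "nat \<Rightarrow> 'a" assume xy: "x \<in> fvec (Suc m)" "y \<in> fvec (Suc m)"
    have "(x + y)(m := 0) = x(m := 0) + y(m := 0)" by (auto simp: fun_eq_iff)
    then have "\<psi> ((x + y)(m := 0)) = \<psi> (x(m := 0)) + \<psi> (y(m := 0))"
      using \<psi>(1) cut[OF xy(1)] cut[OF xy(2)] unfolding linmap_def by simp
    then show "\<phi> (x + y) = \<phi> x + \<phi> y" unfolding \<phi>_def by (auto simp: fun_eq_iff algebra_simps)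
  next
    fix c :: 'a and x :: "nat \<Rightarrow> 'a" assume x: "x \<in> fvec (Suc m)"
    have "(\<lambda>i. c * x i)(m := 0) = (\<lambda>i. c * (x(m := 0)) i)" by (auto simp: fun_eq_iff)
    moreover have "\<psi> (\<lambda>i. c * (x(m := 0)) i) = (\<lambda>i. c * \<psi> (x(m := 0)) i)"
      using \<psi>(1) cut[OF x] unfolding linmap_def by blast
    ultimately have "\<psi> ((\<lambda>i. c * x i)(m := 0)) = (\<lambda>i. c * \<psi> (x(m := 0)) i)"
      by (simp only:)
    then show "\<phi> (\<lambda>i. c * x i) = (\<lambda>i. c * \<phi> x i)" unfolding \<phi>_def by (auto simp: fun_eq_iff algebra_simps)
  qed
  have \<psi>m: "\<psi> z m = 0" if "z \<in> fvec m" for z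
  proof -
    have "\<psi> z \<in> U'" using \<psi>(3) that by blast
    then show ?thesis unfolding U'_def by simp
  qed
  have inj: "inj_on \<phi> (fvec (Suc m))"
  proof (rule inj_onI)
    fix x y :: "nat \<Rightarrow> 'a" assume x: "x \<in> fvec (Suc m)" and y: "y \<in> fvec (Suc m)" and e: "\<phi> x = \<phi> y"
    have "\<phi> x m = \<phi> y m" using e by simp
    then have "x m * p ^ j = y m * p ^ j" unfolding \<phi>_def using \<psi>m[OF cut[OF x]] \<psi>m[OF cut[OF y]] u0(2) by simp
    then have xym: "x m = y m" using pnz by (metis mult_right_cancel)
    then have "\<psi> (x(m := 0)) = \<psi> (y(m := 0))" using e unfolding \<phi>_def by (simp add: fun_eq_iff)
    then have "x(m := 0) = y(m := 0)" using \<psi>(2) cut[OF x] cut[OF y] by (simp add: inj_on_def)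
    show "x = y"
    proof
      fix i show "x i = y i" using fun_cong[OF \<open>x(m := 0) = y(m := 0)\<close>, of i] xym by (cases "i = m") auto
    qed
  qed
  have img: "\<phi> ` fvec (Suc m) = U"
  proof
    show "\<phi> ` fvec (Suc m) \<subseteq> U"
    proof
      fix w assume "w \<in> \<phi> ` fvec (Suc m)"
      then obtain x where x: "x \<in> fvec (Suc m)" "w = \<phi> x" by blast
      have "\<psi> (x(m := 0)) \<in> U" using \<psi>(3) cut[OF x(1)] unfolding U'_def by blast
      moreover have "(\<lambda>i. x m * u0 i) \<in> U" by (rule submod_smul[OF sm u0(1)])
      ultimately show "w \<in> U" unfolding x(2) \<phi>_def by (rule submod_add[OF sm])
    qed
    show "U \<subseteq> \<phi> ` fvec (Suc m)"
    proof
      fix w assume w: "w \<in> U"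
      obtain t where t: "w m = p ^ j * t" using dv w by (auto elim: dvdE)
      have sU: "sg U" by (rule submod_sg[OF sm])
      have "(\<lambda>i. t * u0 i) \<in> U" by (rule submod_smul[OF sm u0(1)])
      then have "w - (\<lambda>i. t * u0 i) \<in> U" using w by (rule sg_diff[OF sU, rotated])
      moreover have "(w - (\<lambda>i. t * u0 i)) m = 0" using t u0(2) by (simp add: fun_diff_def mult.commute)
      ultimately have "w - (\<lambda>i. t * u0 i) \<in> U'" unfolding U'_def by simp
      then have "w - (\<lambda>i. t * u0 i) \<in> \<psi> ` fvec m" using \<psi>(3) by simp
      then obtain y where y2: "w - (\<lambda>i. t * u0 i) = \<psi> y" and y1: "y \<in> fvec m" by (rule imageE)
      note y = y1 y2[symmetric]
      define x where "x = y(m := t)"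
      have ym: "y m = 0" using y(1) unfolding fvec_def by simp
      have "x \<in> fvec (Suc m)" using y(1) unfolding x_def fvec_def by auto
      moreover have "x(m := 0) = y" unfolding x_def using ym by (auto simp: fun_eq_iff)
      then have "\<phi> x = w" unfolding \<phi>_def using y(2) by (simp add: x_def fun_diff_def plus_fun_def)
      ultimately show "w \<in> \<phi> ` fvec (Suc m)" by (auto intro: rev_image_eqI)
    qed
  qed
  show ?case using lin inj img by blast
qed

lemma submod_iff: "submod m U \<longleftrightarrow> U \<subseteq> fvec m \<and> 0 \<in> U \<and> (\<forall>x\<in>U. \<forall>y\<in>U. x + y \<in> U) \<and>
    (\<forall>c. \<forall>x\<in>U. (\<lambda>i. c * x i) \<in> U)"
  by (simp add: submod_def plus_fun_def zero_fun_def)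

lemma linmap_zero: assumes "linmap m \<phi>" shows "\<phi> 0 = 0"
proof -
  have z: "(0::nat\<Rightarrow>'a) \<in> fvec m" by (simp add: fvec_def)
  have "\<phi> (0 + 0) = \<phi> 0 + \<phi> (0 :: nat \<Rightarrow> 'a)" using assms z unfolding linmap_def by blast
  then show ?thesis by simp
qed

lemma linmap_diff: assumes "linmap m \<phi>" "x \<in> fvec m" "y \<in> fvec m" shows "\<phi> (x - y) = \<phi> x - \<phi> y"
proof -
  have "x - y \<in> fvec m" using assms(2,3) fvec_sg by (rule sg_diff[rotated])
  then have "\<phi> ((x - y) + y) = \<phi> (x - y) + \<phi> y" using assms(1,3) unfolding linmap_def by blast
  then show ?thesis by (simp add: algebra_simps)
qed

lemma linmap_uminus: assumes "linmap m \<phi>" "x \<in> fvec m" shows "\<phi> (- x) = - \<phi> x"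
  using linmap_diff[OF assms(1) _ assms(2), of 0] linmap_zero[OF assms(1)] by (simp add: fvec_def)

locale paramL =
  fixes m :: nat and L :: "(nat \<Rightarrow> 'a::comm_ring_1) set" and \<phi>
  assumes L: "findex_submod m L" and lin: "linmap m \<phi>" and inj: "inj_on \<phi> (fvec m)"
    and img: "\<phi> ` fvec m = L"
begin

lemma sm: "submod m L" using L unfolding findex_submod_def by simp
lemma sL: "sg L" by (rule submod_sg[OF sm])
lemma Lsub: "L \<subseteq> fvec m" using sm unfolding submod_def by simp

lemma img_sg: assumes "sg W" "W \<subseteq> fvec m" shows "sg (\<phi> ` W)"
  unfolding sg_def
proof (intro conjI ballI)
  show "0 \<in> \<phi> ` W" using assms linmap_zero[OF lin] unfolding sg_def by (metis image_eqI)
  fix x y assume "x \<in> \<phi> ` W" "y \<in> \<phi> ` W"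
  then obtain a b where "a \<in> W" "b \<in> W" "x = \<phi> a" "y = \<phi> b" by blast
  moreover have "\<phi> (a + b) = \<phi> a + \<phi> b" using lin assms(2) \<open>a \<in> W\<close> \<open>b \<in> W\<close> unfolding linmap_def by blast
  moreover have "a + b \<in> W" using assms(1) \<open>a \<in> W\<close> \<open>b \<in> W\<close> unfolding sg_def by blast
  ultimately show "x + y \<in> \<phi> ` W" by (metis image_eqI)
next
  fix x assume "x \<in> \<phi> ` W"
  then obtain a where "a \<in> W" "x = \<phi> a" by blast
  moreover have "\<phi> (- a) = - \<phi> a" using linmap_uminus[OF lin] assms(2) \<open>a \<in> W\<close> by blast
  moreover have "- a \<in> W" using assms(1) \<open>a \<in> W\<close> unfolding sg_def by blast
  ultimately show "- x \<in> \<phi> ` W" by (metis image_eqI)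
qed

lemma img_index:
  assumes sW: "sg W" and Wf: "W \<subseteq> fvec m"
  shows "card (cs (fvec m) (\<phi> ` W)) = mindex m L * card (cs (fvec m) W)"
proof -
  have s\<phi>W: "sg (\<phi> ` W)" by (rule img_sg[OF sW Wf])
  have sub: "\<phi> ` W \<subseteq> L" using Wf img by blast
  have "card (cs (fvec m) (\<phi> ` W)) = card (cs (fvec m) L) * card (cs L (\<phi> ` W))"
    by (rule lagrange[OF fvec_sg sL s\<phi>W sub Lsub])
  also have "card (cs L (\<phi> ` W)) = card (cs (fvec m) W)"
  proof -
    have "card (((\<lambda>z. (+) z ` (\<phi> ` W)) \<circ> \<phi>) ` fvec m) = card ((\<lambda>z. (+) z ` W) ` fvec m)"
    proof (rule card_image_eqrel)
      fix x y :: "nat \<Rightarrow> 'a" assume xy: "x \<in> fvec m" "y \<in> fvec m"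
      have d: "x - y \<in> fvec m" using xy fvec_sg by (rule sg_diff[rotated])
      have "\<phi> x - \<phi> y \<in> \<phi> ` W \<longleftrightarrow> x - y \<in> W"
      proof
        assume "\<phi> x - \<phi> y \<in> \<phi> ` W"
        then obtain w where w: "w \<in> W" "\<phi> x - \<phi> y = \<phi> w" by blast
        then have "\<phi> (x - y) = \<phi> w" using linmap_diff[OF lin xy] by simp
        then have "x - y = w" using inj d w(1) Wf by (auto simp: inj_on_def)
        then show "x - y \<in> W" using w by simp
      next
        assume "x - y \<in> W"
        then show "\<phi> x - \<phi> y \<in> \<phi> ` W" using linmap_diff[OF lin xy] by (metis image_eqI)
      qed
      then show "((\<lambda>z. (+) z ` (\<phi> ` W)) \<circ> \<phi>) x = ((\<lambda>z. (+) z ` (\<phi> ` W)) \<circ> \<phi>) y \<longleftrightarrow>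
          (+) x ` W = (+) y ` W"
        by (simp add: coset_eq[OF s\<phi>W] coset_eq[OF sW])
    qed
    moreover have "((\<lambda>z. (+) z ` (\<phi> ` W)) \<circ> \<phi>) ` fvec m = cs L (\<phi> ` W)"
      unfolding cs_def image_comp[symmetric] img ..
    ultimately show ?thesis unfolding cs_def by simp
  qed
  finally show ?thesis unfolding mindex_cs .
qed

lemma img_findex:
  assumes W: "findex_submod m W"
  shows "findex_submod m (\<phi> ` W)" and "mindex m (\<phi> ` W) = mindex m L * mindex m W"
proof -
  have smW: "submod m W" using W unfolding findex_submod_def by simp
  have Wf: "W \<subseteq> fvec m" using smW unfolding submod_def by simp
  have sW: "sg W" by (rule submod_sg[OF smW])
  show idx: "mindex m (\<phi> ` W) = mindex m L * mindex m W"
    using img_index[OF sW Wf] unfolding mindex_cs .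
  have "mindex m (\<phi> ` W) > 0" using idx mindex_pos[OF L] mindex_pos[OF W] by simp
  then have fin: "finite (cosets m (\<phi> ` W))" unfolding mindex_def by (simp add: card_gt_0_iff)
  have "submod m (\<phi> ` W)" unfolding submod_iff
  proof (intro conjI ballI allI)
    show "\<phi> ` W \<subseteq> fvec m" using Wf img Lsub by blast
    show "0 \<in> \<phi> ` W" using img_sg[OF sW Wf] unfolding sg_def by blast
    show "x + y \<in> \<phi> ` W" if "x \<in> \<phi> ` W" "y \<in> \<phi> ` W" for x y
      using img_sg[OF sW Wf] that unfolding sg_def by blast
    fix c x assume "x \<in> \<phi> ` W"
    then obtain a where a: "a \<in> W" "x = \<phi> a" by blast
    have "\<phi> (\<lambda>i. c * a i) = (\<lambda>i. c * \<phi> a i)" using lin a(1) Wf unfolding linmap_def by blast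
    moreover have "(\<lambda>i. c * a i) \<in> W" by (rule submod_smul[OF smW a(1)])
    ultimately show "(\<lambda>i. c * x i) \<in> \<phi> ` W" unfolding a(2) by (metis image_eqI)
  qed
  then show "findex_submod m (\<phi> ` W)" using fin unfolding findex_submod_def by simp
qed

lemma img_bij:
  "bij_betw (\<lambda>W. \<phi> ` W) {W. findex_submod m W} {V. findex_submod m V \<and> V \<subseteq> L}"
  unfolding bij_betw_def
proof (intro conjI)
  show "inj_on (\<lambda>W. \<phi> ` W) {W. findex_submod m W}"
  proof (rule inj_onI)
    fix W1 W2 assume "W1 \<in> {W. findex_submod m W}" "W2 \<in> {W. findex_submod m W}" "\<phi> ` W1 = \<phi> ` W2"
    moreover then have "W1 \<subseteq> fvec m" "W2 \<subseteq> fvec m" unfolding findex_submod_def submod_def by auto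
    ultimately show "W1 = W2" using inj by (simp add: inj_on_image_eq_iff)
  qed
  show "(\<lambda>W. \<phi> ` W) ` {W. findex_submod m W} = {V. findex_submod m V \<and> V \<subseteq> L}"
  proof
    show "(\<lambda>W. \<phi> ` W) ` {W. findex_submod m W} \<subseteq> {V. findex_submod m V \<and> V \<subseteq> L}"
    proof
      fix V assume "V \<in> (\<lambda>W. \<phi> ` W) ` {W. findex_submod m W}"
      then obtain W where W: "findex_submod m W" "V = \<phi> ` W" by blast
      have "W \<subseteq> fvec m" using W(1) unfolding findex_submod_def submod_def by auto
      then have "V \<subseteq> L" using W(2) img by blast
      then show "V \<in> {V. findex_submod m V \<and> V \<subseteq> L}" using img_findex(1)[OF W(1)] W(2) by simp
    qed
    show "{V. findex_submod m V \<and> V \<subseteq> L} \<subseteq> (\<lambda>W. \<phi> ` W) ` {W. findex_submod m W}"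
    proof
      fix V assume "V \<in> {V. findex_submod m V \<and> V \<subseteq> L}"
      then have V: "findex_submod m V" "V \<subseteq> L" by auto
      have smV: "submod m V" using V(1) unfolding findex_submod_def by simp
      define W where "W = {x\<in>fvec m. \<phi> x \<in> V}"
      have Wf: "W \<subseteq> fvec m" unfolding W_def by blast
      have VW: "\<phi> ` W = V"
      proof
        show "\<phi> ` W \<subseteq> V" unfolding W_def by blast
        show "V \<subseteq> \<phi> ` W"
        proof
          fix v assume "v \<in> V"
          then have "v \<in> \<phi> ` fvec m" using V(2) img by blast
          then obtain x where "x \<in> fvec m" "v = \<phi> x" by blast
          then show "v \<in> \<phi> ` W" unfolding W_def using \<open>v \<in> V\<close> by blast
        qed
      qed
      have smW: "submod m W" unfolding submod_iff
      proof (intro conjI ballI allI)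
        show "W \<subseteq> fvec m" by (rule Wf)
        show "0 \<in> W" unfolding W_def using linmap_zero[OF lin] smV unfolding submod_iff fvec_def by simp
        show "x + y \<in> W" if "x \<in> W" "y \<in> W" for x y
        proof -
          have "x + y \<in> fvec m" using that Wf fvec_sg unfolding sg_def by blast
          moreover have "\<phi> (x + y) = \<phi> x + \<phi> y" using lin that Wf unfolding linmap_def by blast
          ultimately show ?thesis using that smV unfolding W_def submod_iff by auto
        qed
        fix c x assume x: "x \<in> W"
        have "(\<lambda>i. c * x i) \<in> fvec m" using x Wf unfolding fvec_def by auto
        moreover have "\<phi> (\<lambda>i. c * x i) = (\<lambda>i. c * \<phi> x i)" using lin x Wf unfolding linmap_def by blast
        ultimately show "(\<lambda>i. c * x i) \<in> W" using x smV unfolding W_def submod_iff by auto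
      qed
      have "card (cs (fvec m) V) = mindex m L * card (cs (fvec m) W)"
        using img_index[OF submod_sg[OF smW] Wf] VW by simp
      then have "card (cs (fvec m) W) > 0" using mindex_pos[OF V(1)] unfolding mindex_cs by simp
      then have "finite (cosets m W)" unfolding cosets_cs by (simp add: card_gt_0_iff)
      then have "findex_submod m W" using smW unfolding findex_submod_def by simp
      then show "V \<in> (\<lambda>W. \<phi> ` W) ` {W. findex_submod m W}" using VW by blast
    qed
  qed
qed

lemma sub_sum:
  fixes G :: "nat \<Rightarrow> 'b::{t2_space, topological_semigroup_mult, division_ring}"
  assumes mult: "\<And>a b. a > 0 \<Longrightarrow> b > 0 \<Longrightarrow> G (a * b) = G a * G b"
  shows "infsum (\<lambda>V. G (mindex m V)) {V. findex_submod m V \<and> V \<subseteq> L}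
       = G (mindex m L) * infsum (\<lambda>W. G (mindex m W)) {W :: (nat \<Rightarrow> 'a) set. findex_submod m W}"
proof -
  have "infsum (\<lambda>V. G (mindex m V)) {V. findex_submod m V \<and> V \<subseteq> L}
      = infsum (\<lambda>W. G (mindex m (\<phi> ` W))) {W :: (nat \<Rightarrow> 'a) set. findex_submod m W}"
    by (rule infsum_reindex_bij_betw[OF img_bij, symmetric])
  also have "\<dots> = infsum (\<lambda>W. G (mindex m L) * G (mindex m W)) {W :: (nat \<Rightarrow> 'a) set. findex_submod m W}"
  proof (rule infsum_cong)
    fix W assume "W \<in> {W :: (nat \<Rightarrow> 'a) set. findex_submod m W}"
    then have W: "findex_submod m W" by simp
    show "G (mindex m (\<phi> ` W)) = G (mindex m L) * G (mindex m W)"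
      unfolding img_findex(2)[OF W] by (rule mult[OF mindex_pos[OF L] mindex_pos[OF W]])
  qed
  also have "\<dots> = G (mindex m L) * infsum (\<lambda>W. G (mindex m W)) {W :: (nat \<Rightarrow> 'a) set. findex_submod m W}"
    by (rule infsum_cmult_right')
  finally show ?thesis .
qed

end

lemma geom_real_powr:
  fixes q :: nat and \<sigma> :: real
  assumes "q \<ge> 2" "\<sigma> > 0"
  shows "(\<lambda>j. (real q powr (-\<sigma>)) ^ j) summable_on UNIV"
proof -
  have "real q powr (-\<sigma>) < 1"
    using assms by (intro powr_less_one) auto
  moreover have "real q powr (-\<sigma>) \<ge> 0" by simp
  ultimately have "summable (\<lambda>j. (real q powr (-\<sigma>)) ^ j)" by (simp add: summable_geometric)
  then show ?thesis by (subst summable_on_UNIV_nonneg_real_iff) auto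
qed

lemma F0_finite: "finite {U :: (nat \<Rightarrow> 'a::comm_ring_1) set. findex_submod 0 U}"
proof -
  have "fvec 0 = {(\<lambda>i. 0) :: nat \<Rightarrow> 'a}" unfolding fvec_def by auto
  then have "{U :: (nat \<Rightarrow> 'a) set. findex_submod 0 U} \<subseteq> Pow {(\<lambda>i. 0)}"
    unfolding findex_submod_def submod_def by auto
  then show ?thesis by (rule finite_subset) simp
qed

definition Rel :: "'a::idom \<Rightarrow> nat \<Rightarrow> (nat \<Rightarrow> 'a) set \<Rightarrow> ((nat \<Rightarrow> 'a) set \<times> nat) \<times> (nat \<Rightarrow> 'a) set \<Rightarrow> bool" where
  "Rel p m U t \<longleftrightarrow> fst (fst t) = {x\<in>U. x m = 0} \<and>
     (\<exists>u0\<in>U. u0 m = p ^ snd (fst t) \<and> (\<forall>x\<in>U. p ^ snd (fst t) dvd x m) \<and>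
        snd t = (+) (u0(m := 0)) ` fst (fst t))"

lemma Rel_sub:
  fixes U1 U2 :: "(nat \<Rightarrow> 'a::idom) set"
  assumes U1: "findex_submod (Suc m) U1" and U2: "findex_submod (Suc m) U2"
    and R1: "Rel p m U1 t" and R2: "Rel p m U2 t"
  shows "U1 \<subseteq> U2"
proof
  obtain U' j C where t: "t = ((U', j), C)" by (metis prod.collapse)
  have sm1: "submod (Suc m) U1" and sm2: "submod (Suc m) U2" using U1 U2 unfolding findex_submod_def by auto
  have s1: "sg U1" and s2: "sg U2" using submod_sg sm1 sm2 by auto
  have U'1: "U' = {x\<in>U1. x m = 0}" and U'2: "U' = {x\<in>U2. x m = 0}" using R1 R2 unfolding Rel_def t by auto
  obtain u1 where u1: "u1 \<in> U1" "u1 m = p ^ j" "\<forall>x\<in>U1. p ^ j dvd x m" "C = (+) (u1(m := 0)) ` U'"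
    using R1 unfolding Rel_def t by auto
  obtain u2 where u2: "u2 \<in> U2" "u2 m = p ^ j" "C = (+) (u2(m := 0)) ` U'"
    using R2 unfolding Rel_def t by auto
  have "0 \<in> U'" unfolding U'2 using s2 unfolding sg_def by simp
  then have "u2(m := 0) \<in> C" unfolding u2(3) by (metis add.right_neutral image_eqI)
  then obtain y0 where y0: "y0 \<in> U'" "u2(m := 0) = u1(m := 0) + y0" unfolding u1(4) by blast
  have y0m: "y0 m = 0" using y0(1) unfolding U'2 by simp
  have u12: "u1 = u2 - y0"
  proof
    fix i show "u1 i = (u2 - y0) i"
      using fun_cong[OF y0(2), of i] u1(2) u2(2) y0m by (cases "i = m") (auto simp: fun_diff_def)
  qed
  fix w assume w: "w \<in> U1"
  obtain s where s: "w m = p ^ j * s" using u1(3) w by (auto elim: dvdE)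
  have "(\<lambda>i. s * u1 i) \<in> U1" by (rule submod_smul[OF sm1 u1(1)])
  then have "w - (\<lambda>i. s * u1 i) \<in> U1" using w by (rule sg_diff[OF s1, rotated])
  moreover have "(w - (\<lambda>i. s * u1 i)) m = 0" using s u1(2) by (simp add: fun_diff_def mult.commute)
  ultimately have a: "w - (\<lambda>i. s * u1 i) \<in> U2" using U'1 U'2 by blast
  have y0U2: "y0 \<in> U2" using y0(1) unfolding U'2 by simp
  have b: "(\<lambda>i. s * u2 i) \<in> U2" by (rule submod_smul[OF sm2 u2(1)])
  have c: "(\<lambda>i. s * y0 i) \<in> U2" by (rule submod_smul[OF sm2 y0U2])
  have "(\<lambda>i. s * u2 i) - (\<lambda>i. s * y0 i) \<in> U2" using b c by (rule sg_diff[OF s2])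
  then have "(w - (\<lambda>i. s * u1 i)) + ((\<lambda>i. s * u2 i) - (\<lambda>i. s * y0 i)) \<in> U2"
    using a s2 unfolding sg_def by blast
  moreover have "(w - (\<lambda>i. s * u1 i)) + ((\<lambda>i. s * u2 i) - (\<lambda>i. s * y0 i)) = w"
    unfolding u12 by (auto simp: fun_eq_iff fun_diff_def algebra_simps)
  ultimately show "w \<in> U2" by simp
qed

lemma qpow_powr:
  fixes q :: nat assumes "q > 0"
  shows "(real q ^ j) powr (-\<sigma>) = (real q powr (-\<sigma>)) ^ j"
proof -
  have "(real q ^ j) powr (-\<sigma>) = (real q powr real j) powr (-\<sigma>)" using assms by (simp add: powr_realpow)
  also have "\<dots> = real q powr (real j * (-\<sigma>))" by (rule powr_powr)
  also have "\<dots> = (real q powr (-\<sigma>)) ^ j" using assms by (simp add: powr_power)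
  finally show ?thesis .
qed

lemma count_summable:
  fixes p :: "'a::idom"
  assumes u: "uniformizer p" and qf: "finite (cs UNIV (PI p 1))"
  shows "\<sigma> > real m \<Longrightarrow>
    (\<lambda>U::(nat\<Rightarrow>'a) set. real (mindex m U) powr (-\<sigma>)) summable_on {U. findex_submod m U}"
proof (induction m arbitrary: \<sigma>)
  case 0
  show ?case by (rule summable_on_finite[OF F0_finite])
next
  case (Suc m)
  define q where "q = card (cs UNIV (PI p 1))"
  have q2: "q \<ge> 2" using q_ge2[OF u] qf unfolding q_def by blast
  define F' where "F' = {U::(nat\<Rightarrow>'a) set. findex_submod m U}"
  define F where "F = {U::(nat\<Rightarrow>'a) set. findex_submod (Suc m) U}"
  define \<Psi> where "\<Psi> U = (SOME t. Rel p m U t)" for U :: "(nat\<Rightarrow>'a) set"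
  define T where "T = Sigma (F' \<times> (UNIV :: nat set)) (\<lambda>k. cs (fvec m) (fst k))"
  have R\<Psi>: "Rel p m U (\<Psi> U)" if "U \<in> F" for U
  proof -
    have U: "findex_submod (Suc m) U" using that unfolding F_def by simp
    obtain j u0 where "u0 \<in> U" "u0 m = p ^ j" "\<forall>x\<in>U. p ^ j dvd x m"
      using valuation_choice[OF u U] by blast
    then have "Rel p m U (({x\<in>U. x m = 0}, j), (+) (u0(m := 0)) ` {x\<in>U. x m = 0})"
      unfolding Rel_def by auto
    then show ?thesis unfolding \<Psi>_def by (rule someI)
  qed
  have props: "\<Psi> U \<in> T \<and> mindex (Suc m) U = mindex m (fst (fst (\<Psi> U))) * q ^ snd (fst (\<Psi> U))"
    if "U \<in> F" for U
  proof -
    have U: "findex_submod (Suc m) U" using that unfolding F_def by simp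
    obtain U' j C where t: "\<Psi> U = ((U', j), C)" by (metis prod.collapse)
    have R: "Rel p m U ((U', j), C)" using R\<Psi>[OF that] unfolding t .
    then have U': "U' = {x\<in>U. x m = 0}" unfolding Rel_def by simp
    obtain u0 where u0: "u0 \<in> U" "u0 m = p ^ j" "\<forall>x\<in>U. p ^ j dvd x m" "C = (+) (u0(m := 0)) ` U'"
      using R unfolding Rel_def by auto
    have fU': "findex_submod m U'" unfolding U' by (rule decomp_index(1)[OF u U u0(1,2,3)])
    have "mindex (Suc m) U = mindex m U' * card (cs UNIV (PI p j))"
      unfolding U' by (rule decomp_index(2)[OF u U u0(1,2,3)])
    also have "card (cs UNIV (PI p j)) = q ^ j" unfolding q_def by (rule cs_PI_pow[OF u])
    finally have idx: "mindex (Suc m) U = mindex m U' * q ^ j" .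
    have "U \<subseteq> fvec (Suc m)" using U unfolding findex_submod_def submod_def by simp
    then have u0f: "u0 \<in> fvec (Suc m)" using u0(1) by (rule subsetD)
    have "u0(m := 0) \<in> fvec m" by (rule fvec_Suc_zero) (use u0f in \<open>auto simp: fvec_def\<close>)
    then have "C \<in> cs (fvec m) U'" unfolding u0(4) cs_def by (rule imageI)
    then have "\<Psi> U \<in> T" unfolding t T_def F'_def using fU' by simp
    then show ?thesis unfolding t using idx by simp
  qed
  have inj: "inj_on \<Psi> F"
  proof (rule inj_onI)
    fix U1 U2 assume U: "U1 \<in> F" "U2 \<in> F" and e: "\<Psi> U1 = \<Psi> U2"
    have f: "findex_submod (Suc m) U1" "findex_submod (Suc m) U2" using U unfolding F_def by auto
    have R1: "Rel p m U1 (\<Psi> U1)" by (rule R\<Psi>[OF U(1)])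
    have R2: "Rel p m U2 (\<Psi> U1)" unfolding e by (rule R\<Psi>[OF U(2)])
    show "U1 = U2" using Rel_sub[OF f(1) f(2) R1 R2] Rel_sub[OF f(2) f(1) R2 R1] by (rule subset_antisym)
  qed
  define r where "r = real q powr (-\<sigma>)"
  have \<sigma>pos: "\<sigma> > 0" using Suc.prems by simp
  have geo: "(\<lambda>j. r ^ j) summable_on UNIV" unfolding r_def by (rule geom_real_powr[OF q2 \<sigma>pos])
  define S where "S = infsum (\<lambda>j. r ^ j) (UNIV :: nat set)"
  have geoS: "((\<lambda>j. r ^ j) has_sum S) UNIV" unfolding S_def using geo by simp
  define h where "h t = (real (mindex m (fst (fst t))) * real q ^ snd (fst t)) powr (-\<sigma>)"
    for t :: "((nat\<Rightarrow>'a) set \<times> nat) \<times> (nat\<Rightarrow>'a) set"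
  define g where "g k = real (mindex m (fst k)) powr (1 - \<sigma>) * r ^ snd k" for k :: "(nat\<Rightarrow>'a) set \<times> nat"
  have IH: "(\<lambda>U::(nat\<Rightarrow>'a) set. real (mindex m U) powr (-(\<sigma> - 1))) summable_on F'"
    unfolding F'_def by (rule Suc.IH) (use Suc.prems in simp)
  have g_sum: "g summable_on (F' \<times> UNIV)"
  proof -
    have "g summable_on Sigma F' (\<lambda>_. UNIV)"
    proof (rule summable_on_SigmaI)
      fix U' assume "U' \<in> F'"
      show "((\<lambda>j. g (U', j)) has_sum (real (mindex m U') powr (1 - \<sigma>) * S)) UNIV"
        unfolding g_def by (simp add: has_sum_cmult_right geoS)
    next
      show "(\<lambda>U'. real (mindex m U') powr (1 - \<sigma>) * S) summable_on F'"
        using IH by (intro summable_on_cmult_left) simp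
    next
      fix U' j show "0 \<le> g (U', j)" unfolding g_def r_def by simp
    qed
    then show ?thesis by simp
  qed
  have h_sum: "h summable_on T"
    unfolding T_def
  proof (rule summable_on_SigmaI)
    fix k assume k: "k \<in> F' \<times> (UNIV :: nat set)"
    then have fk: "findex_submod m (fst k)" unfolding F'_def by auto
    then have fin: "finite (cs (fvec m) (fst k))" unfolding findex_submod_def cosets_cs by simp
    have mp: "mindex m (fst k) > 0" by (rule mindex_pos[OF fk])
    have "real (card (cs (fvec m) (fst k))) * h (k, C) = g k" for C
    proof -
      have "real (card (cs (fvec m) (fst k))) * h (k, C)
          = real (mindex m (fst k)) * (real (mindex m (fst k)) powr (-\<sigma>) * (real q ^ snd k) powr (-\<sigma>))"
        unfolding h_def mindex_cs by (simp add: powr_mult)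
      also have "\<dots> = real (mindex m (fst k)) powr (1 - \<sigma>) * r ^ snd k"
      proof -
        have e1: "(real q ^ snd k) powr (-\<sigma>) = r ^ snd k" unfolding r_def by (rule qpow_powr) (use q2 in simp)
        have e2: "real (mindex m (fst k)) * real (mindex m (fst k)) powr (-\<sigma>) = real (mindex m (fst k)) powr (1 + - \<sigma>)"
          by (rule powr_mult_base) simp
        show ?thesis unfolding e1 mult.assoc[symmetric] e2 by simp
      qed
      finally show ?thesis unfolding g_def .
    qed
    then show "((\<lambda>C. h (k, C)) has_sum g k) (cs (fvec m) (fst k))"
      using has_sum_constant[OF fin, of "h (k, undefined)"] unfolding h_def by simp
  next
    show "g summable_on F' \<times> UNIV" by (rule g_sum)
  next
    fix k C show "0 \<le> h (k, C)" unfolding h_def by simp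
  qed
  have "h summable_on \<Psi> ` F"
  proof (rule summable_on_subset_banach[OF h_sum])
    show "\<Psi> ` F \<subseteq> T"
    proof (rule image_subsetI)
      fix U assume "U \<in> F" then show "\<Psi> U \<in> T" using props by simp
    qed
  qed
  then have "(h \<circ> \<Psi>) summable_on F" using summable_on_reindex[OF inj] by blast
  moreover have "(h \<circ> \<Psi>) U = real (mindex (Suc m) U) powr (-\<sigma>)" if "U \<in> F" for U
    using props[OF that] unfolding h_def by simp
  ultimately have "(\<lambda>U. real (mindex (Suc m) U) powr (-\<sigma>)) summable_on F"
    using summable_on_cong[of F "h \<circ> \<Psi>" "\<lambda>U. real (mindex (Suc m) U) powr (-\<sigma>)"] by simp
  then show ?case unfolding F_def .
qed

lemma abs_summable_prod_PiE:
  fixes f :: "'i \<Rightarrow> 'b \<Rightarrow> complex"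
  assumes fin: "finite A" and sm: "\<And>x. x \<in> A \<Longrightarrow> (\<lambda>y. norm (f x y)) summable_on B x"
  shows "(\<lambda>g. norm (\<Prod>x\<in>A. f x (g x))) summable_on PiE A B"
  using fin sm
proof (induction A rule: finite_induct)
  case empty
  then show ?case by simp
next
  case (insert x A)
  have pi: "Pi\<^sub>E (insert x A) B = (\<lambda>(g,y). g(x:=y)) ` (Pi\<^sub>E A B \<times> B x)"
    unfolding PiE_insert_eq
    by (subst swap_product [symmetric]) (simp add: image_image case_prod_unfold)
  have inj: "inj_on (\<lambda>(g, y). g(x := y)) (Pi\<^sub>E A B \<times> B x)"
    using \<open>x \<notin> A\<close> by (rule inj_combinator')
  have IH: "(\<lambda>g. norm (\<Prod>x\<in>A. f x (g x))) summable_on PiE A B" using insert by simp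
  have fx: "(\<lambda>y. norm (f x y)) summable_on B x" using insert by simp
  have eq: "((\<lambda>g. \<Prod>x\<in>insert x A. f x (g x)) \<circ> (\<lambda>(g,y). g(x:=y))) =
             (\<lambda>(p, y). f x y * (\<Prod>x'\<in>A. f x' (p x')))"
  proof -
    have "(\<Prod>z\<in>A. f z ((g(x := y)) z)) = (\<Prod>z\<in>A. f z (g z))" for g y
      using insert.hyps by (intro prod.cong) auto
    then show ?thesis using insert.hyps by (auto simp: fun_eq_iff)
  qed
  have "(\<lambda>t. norm ((\<lambda>(p, y). f x y * (\<Prod>x'\<in>A. f x' (p x'))) t)) summable_on Pi\<^sub>E A B \<times> B x"
  proof -
    have "(\<lambda>t. norm ((\<lambda>(p, y). f x y * (\<Prod>x'\<in>A. f x' (p x'))) t)) summable_on Sigma (Pi\<^sub>E A B) (\<lambda>_. B x)"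
    proof (subst Infinite_Sum.abs_summable_on_Sigma_iff, intro conjI ballI)
      fix p assume "p \<in> Pi\<^sub>E A B"
      show "(\<lambda>y. norm ((\<lambda>(p, y). f x y * (\<Prod>x'\<in>A. f x' (p x'))) (p, y))) summable_on B x"
        using fx by (simp add: norm_mult summable_on_cmult_left)
    next
      have "(\<lambda>p. norm ((\<Sum>\<^sub>\<infinity>y\<in>B x. norm (f x y)) * norm (\<Prod>x'\<in>A. f x' (p x')))) summable_on Pi\<^sub>E A B"
      proof -
        have nn: "(\<Sum>\<^sub>\<infinity>y\<in>B x. norm (f x y)) \<ge> 0" by (rule infsum_nonneg) simp
        show ?thesis using IH nn by (simp add: abs_mult summable_on_cmult_right)
      qed
      moreover have "(\<Sum>\<^sub>\<infinity>y\<in>B x. norm ((\<lambda>(p, y). f x y * (\<Prod>x'\<in>A. f x' (p x'))) (p, y)))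
          = (\<Sum>\<^sub>\<infinity>y\<in>B x. norm (f x y)) * norm (\<Prod>x'\<in>A. f x' (p x'))" for p
        by (simp add: norm_mult infsum_cmult_left')
      ultimately show "(\<lambda>p. norm (\<Sum>\<^sub>\<infinity>y\<in>B x. norm ((\<lambda>(p, y). f x y * (\<Prod>x'\<in>A. f x' (p x'))) (p, y))))
          summable_on Pi\<^sub>E A B" by simp
    qed
    then show ?thesis by simp
  qed
  then have "(\<lambda>t. norm (((\<lambda>g. \<Prod>x\<in>insert x A. f x (g x)) \<circ> (\<lambda>(g,y). g(x:=y))) t)) summable_on (Pi\<^sub>E A B \<times> B x)"
    unfolding eq .
  then have "(\<lambda>g. norm (\<Prod>x\<in>insert x A. f x (g x))) summable_on ((\<lambda>(g,y). g(x:=y)) ` (Pi\<^sub>E A B \<times> B x))"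
    using summable_on_reindex[OF inj, of "\<lambda>g. norm (\<Prod>x\<in>insert x A. f x (g x))"] by (simp add: o_def)
  then show ?case unfolding pi .
qed

theorem proposition3p9:
  fixes m a :: nat and s :: complex
  assumes "is_dvr TYPE('a::idom)"
    and "is_compact_dvr TYPE('a)"
    and "a \<ge> 1"
    and "Re s > real m"
  shows "zeta_dual_star TYPE('a) m a s
           = zeta_free TYPE('a) m (of_nat a * s) * zeta_free TYPE('a) m s ^ (a - 1)"
proof -
  obtain p :: 'a where u: "uniformizer p" and c: "compact_space (adic_topology p)"
    using assms(2) unfolding is_compact_dvr_def by blast
  have qf: "finite (cs UNIV (PI p 1))" by (rule q_finite[OF c])
  define F where "F = {U :: (nat \<Rightarrow> 'a) set. findex_submod m U}"
  define G where "G z n = (of_nat n :: complex) powr (-z)" for z n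
  define g where "g U = G s (mindex m U)" for U :: "(nat \<Rightarrow> 'a) set"
  define nG where "nG \<sigma> n = real n powr (-\<sigma>)" for \<sigma> n
  have normg: "norm (G z n) = nG (Re z) n" for z n
    unfolding G_def nG_def by (subst norm_powr_real_powr) auto
  have Gmult: "G z (x * y) = G z x * G z y" for z x y
    unfolding G_def of_nat_mult by (rule powr_times_real) auto
  have nGmult: "nG \<sigma> (x * y) = nG \<sigma> x * nG \<sigma> y" for \<sigma> x y
    unfolding nG_def of_nat_mult by (rule powr_mult)
  have nsum: "(\<lambda>U. nG \<sigma> (mindex m U)) summable_on F" if "\<sigma> > real m" for \<sigma>
    using count_summable[OF u qf that] unfolding nG_def F_def .
  have ng: "norm (g U) = nG (Re s) (mindex m U)" for U unfolding g_def normg ..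
  have gabs: "(\<lambda>U. norm (g U)) summable_on F" unfolding ng using nsum assms(4) .
  define sub where "sub L = {V. findex_submod m V \<and> V \<subseteq> L}" for L :: "(nat \<Rightarrow> 'a) set"
  have subF: "sub L \<subseteq> F" for L unfolding sub_def F_def by blast
  have gabs_sub: "(\<lambda>U. norm (g U)) summable_on sub L" for L
    by (rule summable_on_subset_banach[OF gabs subF])
  have sub_sums: "infsum g (sub L) = g L * infsum g F \<and>
      infsum (\<lambda>V. norm (g V)) (sub L) = norm (g L) * infsum (\<lambda>V. norm (g V)) F" if "L \<in> F" for L
  proof -
    have fL: "findex_submod m L" using that unfolding F_def by simp
    obtain \<phi> where "linmap m \<phi>" "inj_on \<phi> (fvec m)" "\<phi> ` fvec m = L"
      using free_param[OF u fL] by blast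
    then interpret paramL m L \<phi> using fL by unfold_locales auto
    have "infsum (\<lambda>V. G s (mindex m V)) (sub L) = G s (mindex m L) * infsum (\<lambda>V. G s (mindex m V)) F"
      unfolding sub_def F_def by (rule sub_sum) (rule Gmult)
    moreover have "infsum (\<lambda>V. nG (Re s) (mindex m V)) (sub L)
        = nG (Re s) (mindex m L) * infsum (\<lambda>V. nG (Re s) (mindex m V)) F"
      unfolding sub_def F_def by (rule sub_sum) (rule nGmult)
    ultimately show ?thesis unfolding ng unfolding g_def by simp
  qed
  define S where "S = {\<Lambda>. fi_subrep a {1..<a} (\<lambda>j. j) (\<lambda>j. 0) (\<lambda>i. m) (\<lambda>j (x::nat \<Rightarrow> 'a). x) \<Lambda>}"
  have lhs: "zeta_dual_star TYPE('a) m a s = infsum (\<lambda>\<Lambda>. \<Prod>i<a. g (\<Lambda> i)) S"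
    unfolding zeta_dual_star_def zeta_rep_def g_def G_def S_def by simp
  define \<Sigma> where "\<Sigma> = Sigma F (\<lambda>L. PiE {1..<a} (\<lambda>_. sub L))"
  define \<beta> where "\<beta> t = (\<lambda>i. if i = 0 then fst t else if i < a then snd t i else {})"
    for t :: "(nat \<Rightarrow> 'a) set \<times> (nat \<Rightarrow> (nat \<Rightarrow> 'a) set)"
  define \<beta>' where "\<beta>' \<Lambda> = (\<Lambda> 0, restrict \<Lambda> {1..<a})" for \<Lambda> :: "nat \<Rightarrow> (nat \<Rightarrow> 'a) set"
  have a0: "0 < a" using assms(3) by simp
  have bij: "bij_betw \<beta> \<Sigma> S"
  proof (rule bij_betw_byWitness[where f' = \<beta>'])
    show "\<forall>t\<in>\<Sigma>. \<beta>' (\<beta> t) = t"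
    proof
      fix t assume t: "t \<in> \<Sigma>"
      obtain L f where tLf: "t = (L, f)" by (metis prod.collapse)
      have f: "f \<in> PiE {1..<a} (\<lambda>_. sub L)" using t unfolding \<Sigma>_def tLf by simp
      have "restrict (\<beta> t) {1..<a} = f"
      proof
        fix i show "restrict (\<beta> t) {1..<a} i = f i"
          using f unfolding \<beta>_def tLf by (cases "i \<in> {1..<a}") (auto simp: PiE_def extensional_def)
      qed
      then show "\<beta>' (\<beta> t) = t" unfolding \<beta>'_def tLf by (simp add: \<beta>_def)
    qed
    show "\<forall>\<Lambda>\<in>S. \<beta> (\<beta>' \<Lambda>) = \<Lambda>"
    proof
      fix \<Lambda> assume "\<Lambda> \<in> S"
      then have "\<forall>i\<ge>a. \<Lambda> i = {}" unfolding S_def fi_subrep_def by simp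
      then show "\<beta> (\<beta>' \<Lambda>) = \<Lambda>" unfolding \<beta>_def \<beta>'_def by (auto simp: fun_eq_iff)
    qed
    show "\<beta> ` \<Sigma> \<subseteq> S"
    proof
      fix \<Lambda> assume "\<Lambda> \<in> \<beta> ` \<Sigma>"
      then obtain L f where Lf: "L \<in> F" "f \<in> PiE {1..<a} (\<lambda>_. sub L)" "\<Lambda> = \<beta> (L, f)"
        unfolding \<Sigma>_def by auto
      have fi: "findex_submod m (f i) \<and> f i \<subseteq> L" if "i \<in> {1..<a}" for i
        using Lf(2) that unfolding sub_def by auto
      show "\<Lambda> \<in> S" unfolding S_def fi_subrep_def
      proof (intro CollectI conjI allI impI ballI)
        fix i assume "i < a"
        then show "findex_submod ((\<lambda>i. m) i) (\<Lambda> i)"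
          using Lf(1) fi[of i] unfolding Lf(3) \<beta>_def F_def by auto
      next
        fix i assume "a \<le> i" then show "\<Lambda> i = {}" using a0 unfolding Lf(3) \<beta>_def by auto
      next
        fix e assume "e \<in> {1..<a}"
        then show "(\<lambda>x. x) ` \<Lambda> e \<subseteq> \<Lambda> 0" using fi[of e] unfolding Lf(3) \<beta>_def by auto
      qed
    qed
    show "\<beta>' ` S \<subseteq> \<Sigma>"
    proof
      fix t assume "t \<in> \<beta>' ` S"
      then obtain \<Lambda> where L: "\<Lambda> \<in> S" "t = \<beta>' \<Lambda>" by blast
      have P: "(\<forall>i<a. findex_submod m (\<Lambda> i)) \<and> (\<forall>e\<in>{1..<a}. \<Lambda> e \<subseteq> \<Lambda> 0)"
        using L(1) unfolding S_def fi_subrep_def by simp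
      have "\<Lambda> 0 \<in> F" using P a0 unfolding F_def by simp
      moreover have "restrict \<Lambda> {1..<a} \<in> PiE {1..<a} (\<lambda>_. sub (\<Lambda> 0))"
        using P unfolding sub_def by auto
      ultimately show "t \<in> \<Sigma>" unfolding L(2) \<beta>'_def \<Sigma>_def by simp
    qed
  qed
  define w where "w t = g (fst t) * (\<Prod>i\<in>{1..<a}. g (snd t i))"
    for t :: "(nat \<Rightarrow> 'a) set \<times> (nat \<Rightarrow> (nat \<Rightarrow> 'a) set)"
  have step1: "infsum (\<lambda>\<Lambda>. \<Prod>i<a. g (\<Lambda> i)) S = infsum w \<Sigma>"
  proof -
    have "infsum (\<lambda>\<Lambda>. \<Prod>i<a. g (\<Lambda> i)) S = infsum (\<lambda>t. \<Prod>i<a. g (\<beta> t i)) \<Sigma>"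
      by (rule infsum_reindex_bij_betw[OF bij, symmetric])
    also have "\<dots> = infsum w \<Sigma>"
    proof (rule infsum_cong)
      fix t :: "(nat \<Rightarrow> 'a) set \<times> (nat \<Rightarrow> (nat \<Rightarrow> 'a) set)"
      have ins: "{..<a} = insert 0 {1..<a}" using a0 by auto
      have "(\<Prod>i\<in>{1..<a}. g (\<beta> t i)) = (\<Prod>i\<in>{1..<a}. g (snd t i))"
        by (rule prod.cong) (auto simp: \<beta>_def)
      then show "(\<Prod>i<a. g (\<beta> t i)) = w t" unfolding ins w_def by (simp add: \<beta>_def)
    qed
    finally show ?thesis .
  qed
  define Z where "Z = infsum g F"
  define Zr where "Zr = infsum (\<lambda>V. norm (g V)) F"
  obtain k where ak: "a = Suc k" using a0 by (cases a) auto
  have card1: "card {1..<a} = a - 1" by simp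
  have powid: "x * (x * y) ^ (a - 1) = x ^ a * y ^ (a - 1)" for x y :: "'b::comm_semiring_1"
    unfolding ak by (simp add: power_mult_distrib mult.assoc)
  have PiE_abs: "(\<lambda>f. norm (\<Prod>i\<in>{1..<a}. g (f i))) summable_on PiE {1..<a} (\<lambda>_. sub L)" for L
    by (rule abs_summable_prod_PiE[of "{1..<a}" "\<lambda>_ V. g V" "\<lambda>_. sub L"])
       (use gabs_sub in auto)
  have gabs_sub': "(\<lambda>V. norm (norm (g V))) summable_on sub L" for L using gabs_sub by simp
  have inner_norm: "infsum (\<lambda>f. norm (w (L, f))) (PiE {1..<a} (\<lambda>_. sub L)) = norm (g L) ^ a * Zr ^ (a - 1)"
    if "L \<in> F" for L
  proof -
    have "infsum (\<lambda>f. norm (w (L, f))) (PiE {1..<a} (\<lambda>_. sub L))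
        = infsum (\<lambda>f. norm (g L) * (\<Prod>i\<in>{1..<a}. norm (g (f i)))) (PiE {1..<a} (\<lambda>_. sub L))"
      unfolding w_def by (simp add: norm_mult prod_norm)
    also have "\<dots> = norm (g L) * infsum (\<lambda>f. \<Prod>i\<in>{1..<a}. norm (g (f i))) (PiE {1..<a} (\<lambda>_. sub L))"
      by (rule infsum_cmult_right')
    also have "infsum (\<lambda>f. \<Prod>i\<in>{1..<a}. norm (g (f i))) (PiE {1..<a} (\<lambda>_. sub L))
        = (\<Prod>i\<in>{1..<a}. infsum (\<lambda>V. norm (g V)) (sub L))"
      by (rule infsum_prod_PiE_abs[of "{1..<a}" "\<lambda>_ V. norm (g V)" "\<lambda>_. sub L"])
         (use gabs_sub' in auto)
    also have "\<dots> = (norm (g L) * Zr) ^ (a - 1)" using sub_sums[OF that] unfolding Zr_def by simp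
    finally show ?thesis using powid by simp
  qed
  have ngpow: "norm (g L) ^ a = nG (real a * Re s) (mindex m L)" if "L \<in> F" for L
  proof -
    have mp: "mindex m L > 0" using mindex_pos that unfolding F_def by blast
    have "norm (g L) ^ a = (real (mindex m L) powr (- Re s)) ^ a" unfolding ng nG_def ..
    also have "\<dots> = real (mindex m L) powr (real a * (- Re s))" using mp by (simp add: powr_power)
    finally show ?thesis unfolding nG_def by simp
  qed
  have gpow: "g L ^ a = G (of_nat a * s) (mindex m L)" if "L \<in> F" for L
  proof -
    have mp: "mindex m L > 0" using mindex_pos that unfolding F_def by blast
    have "g L ^ a = ((of_nat (mindex m L) :: complex) powr (- s)) ^ a" unfolding g_def G_def ..
    also have "\<dots> = (of_nat (mindex m L) :: complex) powr (of_nat a * (- s))" using mp by (simp add: powr_power)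
    finally show ?thesis unfolding G_def by simp
  qed
  have wsum: "w summable_on \<Sigma>"
  proof (rule abs_summable_summable)
    have "(\<lambda>t. norm (w t)) summable_on Sigma F (\<lambda>L. PiE {1..<a} (\<lambda>_. sub L))"
    proof (subst Infinite_Sum.abs_summable_on_Sigma_iff, intro conjI ballI)
      fix L assume "L \<in> F"
      show "(\<lambda>f. norm (w (L, f))) summable_on PiE {1..<a} (\<lambda>_. sub L)"
        unfolding w_def norm_mult fst_conv snd_conv by (rule summable_on_cmult_right[OF PiE_abs])
    next
      have "(\<lambda>L. nG (real a * Re s) (mindex m L) * Zr ^ (a - 1)) summable_on F"
      proof (rule summable_on_cmult_left)
        show "(\<lambda>L. nG (real a * Re s) (mindex m L)) summable_on F"
        proof (rule nsum)
          have "real m < Re s" by (rule assms(4))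
          also have "Re s \<le> real a * Re s" using assms(3,4) by (simp add: mult_le_cancel_right1)
          finally show "real m < real a * Re s" .
        qed
      qed
      moreover have "norm (infsum (\<lambda>f. norm (w (L, f))) (PiE {1..<a} (\<lambda>_. sub L)))
          = nG (real a * Re s) (mindex m L) * Zr ^ (a - 1)" if "L \<in> F" for L
      proof -
        have "Zr \<ge> 0" unfolding Zr_def by (rule infsum_nonneg) simp
        moreover have "nG (real a * Re s) (mindex m L) \<ge> 0" unfolding nG_def by simp
        ultimately show ?thesis using inner_norm[OF that] ngpow[OF that] by simp
      qed
      ultimately show "(\<lambda>L. norm (infsum (\<lambda>f. norm (w (L, f))) (PiE {1..<a} (\<lambda>_. sub L)))) summable_on F"
        using summable_on_cong by (smt (verit, ccfv_SIG))
    qed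
    then show "(\<lambda>t. norm (w t)) summable_on \<Sigma>" unfolding \<Sigma>_def .
  qed
  have "infsum w \<Sigma> = infsum (\<lambda>L. infsum (\<lambda>f. w (L, f)) (PiE {1..<a} (\<lambda>_. sub L))) F"
    unfolding \<Sigma>_def by (rule infsum_Sigma_banach[symmetric]) (use wsum in \<open>simp add: \<Sigma>_def\<close>)
  also have "\<dots> = infsum (\<lambda>L. G (of_nat a * s) (mindex m L) * Z ^ (a - 1)) F"
  proof (rule infsum_cong)
    fix L assume L: "L \<in> F"
    have "infsum (\<lambda>f. w (L, f)) (PiE {1..<a} (\<lambda>_. sub L))
        = g L * infsum (\<lambda>f. \<Prod>i\<in>{1..<a}. g (f i)) (PiE {1..<a} (\<lambda>_. sub L))"
      unfolding w_def by (simp add: infsum_cmult_right')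
    also have "infsum (\<lambda>f. \<Prod>i\<in>{1..<a}. g (f i)) (PiE {1..<a} (\<lambda>_. sub L))
        = (\<Prod>i\<in>{1..<a}. infsum g (sub L))"
      by (rule infsum_prod_PiE_abs[of "{1..<a}" "\<lambda>_ V. g V" "\<lambda>_. sub L"])
         (use gabs_sub in auto)
    also have "\<dots> = (g L * Z) ^ (a - 1)" using sub_sums[OF L] unfolding Z_def by simp
    also have "g L * (g L * Z) ^ (a - 1) = G (of_nat a * s) (mindex m L) * Z ^ (a - 1)"
    proof -
      have "g L * (g L * Z) ^ (a - 1) = g L ^ a * Z ^ (a - 1)"
        unfolding ak by (simp add: power_mult_distrib mult.assoc)
      then show ?thesis using gpow[OF L] by simp
    qed
    finally show "infsum (\<lambda>f. w (L, f)) (PiE {1..<a} (\<lambda>_. sub L)) = G (of_nat a * s) (mindex m L) * Z ^ (a - 1)" .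
  qed
  also have "\<dots> = infsum (\<lambda>L. G (of_nat a * s) (mindex m L)) F * Z ^ (a - 1)"
    by (rule infsum_cmult_left')
  finally have main: "infsum w \<Sigma> = infsum (\<lambda>L. G (of_nat a * s) (mindex m L)) F * Z ^ (a - 1)" .
  have zf: "zeta_free TYPE('a) m z = infsum (\<lambda>U. G z (mindex m U)) F" for z
    unfolding zeta_free_def G_def F_def ..
  have "zeta_dual_star TYPE('a) m a s = infsum w \<Sigma>" using lhs step1 by simp
  also note main
  finally show ?thesis unfolding zf Z_def g_def .
qed

end
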